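(* Let $X_0, X_1, \dots$ be positive, independent, identically distributed random variables with $E X_i = \mu_X > 0$, and let $L_1, L_2, \dots$ be positive, independent, identically distributed random variables with $E L_i = \mu_L < \infty$. Let $l_0 > 0$ be a constant. Consider the following stochastic "ant on a rubber rope" process. Initially the rope has length $R_0 = l_0$ and the ant is at the left endpoint, at position $p_0 = 0$. For each second $i = 1, 2, \dots$: first the ant moves forward along the rope by $X_{i-1}$ units, reaching position $p_{i-1} + X_{i-1}$; if $p_{i-1} + X_{i-1} \geq R_{i-1}$, the ant has reached the right endpoint of the rope at second $i$. Otherwise, at the end of second $i$ the rope stretches uniformly and instantly by $L_i$ units to length $R_i = R_{i-1} + L_i$, and the ant (carried along by the uniform stretching) is at position $p_i = (p_{i-1} + X_{i-1}) \cdot \frac{R_i}{R_{i-1}}$. Then, almost surely, the ant reaches the right endpoint of the rope at some finite second.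
   Context: Uniform stretching of the rope means that every point of the rope is scaled by the same factor, so the ratio of the ant's position to the rope's length is unchanged by a stretch. *)

theory Defs
  imports "HOL-Probability.Probability"
begin

definition rope_len :: "real \<Rightarrow> (nat \<Rightarrow> 'a \<Rightarrow> real) \<Rightarrow> nat \<Rightarrow> 'a \<Rightarrow> real" where
  "rope_len l0 L n \<omega> = l0 + (\<Sum>i\<in>{1..n}. L i \<omega>)"

text \<open>Ant position p_n: p_0 = 0, p_(i+1) = (p_i + X_i) * R_(i+1) / R_i.
  (After the ant has reached the endpoint, the values are irrelevant.)\<close>
primrec ant_pos :: "real \<Rightarrow> (nat \<Rightarrow> 'a \<Rightarrow> real) \<Rightarrow> (nat \<Rightarrow> 'a \<Rightarrow> real) \<Rightarrow> nat \<Rightarrow> 'a \<Rightarrow> real" where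
  "ant_pos l0 X L 0 \<omega> = 0"
| "ant_pos l0 X L (Suc i) \<omega> =
     (ant_pos l0 X L i \<omega> + X i \<omega>) * (rope_len l0 L (Suc i) \<omega> / rope_len l0 L i \<omega>)"

end

theory Submission
  imports Defs "HOL-Real_Asymp.Real_Asymp"
begin

lemma ant_pos_eq:
  assumes "\<And>k. k \<le> i \<Longrightarrow> rope_len l0 L k \<omega> \<noteq> 0"
  shows "ant_pos l0 X L i \<omega> = rope_len l0 L i \<omega> * (\<Sum>k<i. X k \<omega> / rope_len l0 L k \<omega>)"
  using assms
proof (induction i)
  case 0 then show ?case by simp
next
  case (Suc i)
  have IH: "ant_pos l0 X L i \<omega> = rope_len l0 L i \<omega> * (\<Sum>k<i. X k \<omega> / rope_len l0 L k \<omega>)"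
    using Suc by simp
  have nz: "rope_len l0 L i \<omega> \<noteq> 0" using Suc.prems by simp
  show ?case using nz by (simp add: IH field_simps)
qed

lemma rope_mono:
  assumes "\<And>i. i \<ge> 1 \<Longrightarrow> L i \<omega> > 0" "k \<le> n"
  shows "rope_len l0 L k \<omega> \<le> rope_len l0 L n \<omega>"
  unfolding rope_len_def using assms
  by (intro add_left_mono sum_mono2) (auto intro: less_imp_le)

lemma rope_pos:
  assumes "\<And>i. i \<ge> 1 \<Longrightarrow> L i \<omega> > 0" "l0 > 0"
  shows "rope_len l0 L k \<omega> \<ge> l0"
proof -
  have "0 \<le> (\<Sum>i\<in>{1..k}. L i \<omega>)"
    by (rule sum_nonneg) (use assms(1) in \<open>fastforce intro: less_imp_le\<close>)
  then show ?thesis unfolding rope_len_def by simp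
qed

theorem theorem1:
  fixes M :: "'a measure" and X L :: "nat \<Rightarrow> 'a \<Rightarrow> real" and l0 :: real
  assumes "prob_space M"
    and X_pos: "\<And>i \<omega>. \<omega> \<in> space M \<Longrightarrow> X i \<omega> > 0"
    and X_indep: "prob_space.indep_vars M (\<lambda>_. borel) X UNIV"
    and X_id: "\<And>i. distr M borel (X i) = distr M borel (X 0)"
    and X_int: "integrable M (X 0)"
    and X_mean: "prob_space.expectation M (X 0) > 0"
    and L_pos: "\<And>i \<omega>. i \<ge> 1 \<Longrightarrow> \<omega> \<in> space M \<Longrightarrow> L i \<omega> > 0"
    and L_indep: "prob_space.indep_vars M (\<lambda>_. borel) L {1..}"
    and L_id: "\<And>i. i \<ge> 1 \<Longrightarrow> distr M borel (L i) = distr M borel (L 1)"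
    and L_int: "integrable M (L 1)"
    and l0_pos: "l0 > 0"
  shows "AE \<omega> in M. \<exists>i. ant_pos l0 X L i \<omega> + X i \<omega> \<ge> rope_len l0 L i \<omega>"
proof -
  interpret prob_space M by fact
  define R where "R = rope_len l0 L"
  have Rge: "R k \<omega> \<ge> l0" if "\<omega> \<in> space M" for k \<omega>
    unfolding R_def by (rule rope_pos[OF _ l0_pos]) (use L_pos that in auto)
  have Rpos: "R k \<omega> > 0" if "\<omega> \<in> space M" for k \<omega>
    using Rge[OF that, of k] l0_pos by linarith
  have Rmono: "R k \<omega> \<le> R n \<omega>" if "\<omega> \<in> space M" "k \<le> n" for k n \<omega>
    unfolding R_def by (rule rope_mono) (use L_pos that in auto)
  have Xm[measurable]: "X i \<in> borel_measurable M" for i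
    using X_indep unfolding indep_vars_def by auto
  have Lm: "L i \<in> borel_measurable M" if "i \<ge> 1" for i
    using L_indep that unfolding indep_vars_def by auto
  have Rm[measurable]: "R n \<in> borel_measurable M" for n
    unfolding R_def rope_len_def
    by (intro borel_measurable_add borel_measurable_const borel_measurable_sum) (auto intro: Lm)
  have Lint: "integrable M (L i)" and Lexp: "expectation (L i) = expectation (L 1)" if "i \<ge> 1" for i
  proof -
    have "integrable M (L i) \<longleftrightarrow> integrable (distr M borel (L i)) (\<lambda>x. x)"
      using integrable_distr_eq[OF Lm[OF that], where f="\<lambda>x. x"] by simp
    also have "\<dots> \<longleftrightarrow> integrable (distr M borel (L 1)) (\<lambda>x. x)" using L_id[OF that] by simp
    also have "\<dots> \<longleftrightarrow> integrable M (L 1)"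
      using integrable_distr_eq[OF Lm[of 1], where f="\<lambda>x. x"] by simp
    finally show "integrable M (L i)" using L_int by simp
    have "expectation (L i) = integral\<^sup>L (distr M borel (L i)) (\<lambda>x. x)"
      using integral_distr[OF Lm[OF that], where f="\<lambda>x. x"] by simp
    also have "\<dots> = integral\<^sup>L (distr M borel (L 1)) (\<lambda>x. x)" using L_id[OF that] by simp
    also have "\<dots> = expectation (L 1)"
      using integral_distr[OF Lm[of 1], where f="\<lambda>x. x"] by simp
    finally show "expectation (L i) = expectation (L 1)" .
  qed
  define \<mu>L where "\<mu>L = expectation (L 1)"
  have \<mu>L_nn: "\<mu>L \<ge> 0" unfolding \<mu>L_def
    by (rule integral_nonneg_AE, rule AE_I2) (simp add: L_pos less_imp_le)
  have Rint: "integrable M (R n)" for n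
  proof -
    have "integrable M (\<lambda>\<omega>. \<Sum>i\<in>{1..n}. L i \<omega>)"
      by (rule Bochner_Integration.integrable_sum) (simp add: Lint)
    then have "integrable M (\<lambda>\<omega>. l0 + (\<Sum>i\<in>{1..n}. L i \<omega>))"
      by (rule Bochner_Integration.integrable_add[OF finite_measure.integrable_const[OF finite_measure_axioms]])
    then show ?thesis unfolding R_def rope_len_def .
  qed
  have Rexp: "expectation (R n) = l0 + n * \<mu>L" for n
  proof -
    have "expectation (R n) = expectation (\<lambda>\<omega>. l0) + (\<Sum>i\<in>{1..n}. expectation (L i))"
    proof -
      have s: "expectation (\<lambda>\<omega>. \<Sum>i\<in>{1..n}. L i \<omega>) = (\<Sum>i\<in>{1..n}. expectation (L i))"
        by (rule Bochner_Integration.integral_sum) (simp add: Lint)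
      have i: "integrable M (\<lambda>\<omega>. \<Sum>i\<in>{1..n}. L i \<omega>)"
        by (rule Bochner_Integration.integrable_sum) (simp add: Lint)
      show ?thesis unfolding R_def rope_len_def
        using Bochner_Integration.integral_add[OF finite_measure.integrable_const[OF finite_measure_axioms] i, of l0] s
        by simp
    qed
    also have "(\<Sum>i\<in>{1..n}. expectation (L i)) = (\<Sum>i\<in>{1..n}. \<mu>L)"
      by (rule sum.cong[OF refl]) (use Lexp[folded \<mu>L_def] in auto)
    also have "expectation (\<lambda>\<omega>. l0) + (\<Sum>i\<in>{1..n}. \<mu>L) = l0 + n * \<mu>L" by (simp add: prob_space)
    finally show ?thesis .
  qed
  define Y where "Y k \<omega> = min (X k \<omega>) 1" for k \<omega>
  have Ym[measurable]: "Y k \<in> borel_measurable M" for k unfolding Y_def by measurable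
  have Yint: "integrable M (Y 0)"
    by (rule integrable_const_bound[where B=1]) (auto simp: Y_def X_pos less_imp_le)
  define m where "m = expectation (Y 0)"
  have m_pos: "m > 0"
  proof -
    have "integral\<^sup>L M (\<lambda>_. 0::real) < integral\<^sup>L M (Y 0)"
      by (rule integral_less_AE_space) (auto simp: Yint Y_def X_pos emeasure_space_1)
    then show ?thesis by (simp add: m_def)
  qed
  have Yeq: "Y = (\<lambda>k \<omega>. min (X k \<omega>) 1)" by (intro ext) (simp add: Y_def)
  have Yind: "indep_vars (\<lambda>_. borel) Y UNIV"
    unfolding Yeq using indep_vars_compose2[OF X_indep, where Y="\<lambda>_ x. min x 1" and N="\<lambda>_. borel"] by simp
  have Ydistr: "distr M borel (Y k) = distr M borel (Y 0)" for k
  proof -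
    have e: "distr (distr M borel (X i)) borel (\<lambda>x. min x 1) = distr M borel (Y i)" for i
      by (subst distr_distr) (auto simp: comp_def Yeq)
    show ?thesis using e[of k] e[of 0] X_id[of k] by simp
  qed
  define I where "I j = {2^j..<(2::nat)^Suc j}" for j
  have cardI: "card (I j) = 2^j" for j unfolding I_def by simp
  have hoeff: "prob {\<omega>\<in>space M. (\<Sum>k\<in>I j. Y k \<omega>) / 2^j \<le> m/2} \<le> exp (-2 * 2^j * (m/2)\<^sup>2)" for j
  proof -
    interpret H: Hoeffding_ineq_iid M "I j" Y "Y 0" 0 1 m
    proof unfold_locales
      show "finite (I j)" unfolding I_def by simp
      show "indep_vars (\<lambda>_. borel) Y (I j)" by (rule indep_vars_subset[OF Yind]) simp
      show "distr M borel (Y i) = distr M borel (Y 0)" if "i \<in> I j" for i by (rule Ydistr)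
      show "random_variable borel (Y 0)" by simp
      show "AE x in M. Y 0 x \<in> {0..1}" by (rule AE_I2) (auto simp: Y_def X_pos less_imp_le)
      show "m \<equiv> expectation (Y 0)" by (simp add: m_def)
    qed
    have "I j \<noteq> {}" using cardI[of j] by auto
    then have "prob {x\<in>space M. (\<Sum>i\<in>I j. Y i x) / real (card (I j)) \<le> m - m/2} \<le>
               exp (-2 * real (card (I j)) * (m/2)\<^sup>2 / (1 - 0)\<^sup>2)"
      using m_pos by (intro H.Hoeffding_ineq_le') auto
    then show ?thesis by (simp add: cardI)
  qed
  define S where "S n \<omega> = (\<Sum>k<n. X k \<omega> / R k \<omega>)" for n \<omega>
  have Seq: "S = (\<lambda>n \<omega>. \<Sum>k<n. X k \<omega> / R k \<omega>)" by (intro ext) (simp add: S_def)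
  have Sm[measurable]: "S n \<in> borel_measurable M" for n unfolding Seq by measurable
  define D where "D = {\<omega>\<in>space M. \<exists>n. S n \<omega> \<ge> 1}"
  have Dm: "D \<in> sets M" unfolding D_def by measurable
  have small: "measure M (space M - D) \<le> \<epsilon>" if epos: "\<epsilon> > 0" for \<epsilon>
  proof -
    define K where "K = 2 * (l0 + 2 * \<mu>L) / \<epsilon>"
    have Kpos: "K > 0" unfolding K_def using l0_pos \<mu>L_nn epos by simp
    define c where "c = m / (2 * K)"
    have cpos: "c > 0" unfolding c_def using m_pos Kpos by simp
    define G where "G j = {\<omega>\<in>space M. (\<Sum>k\<in>I j. Y k \<omega>) / 2^j > m/2 \<and> R (2^Suc j) \<omega> < K * 2^j}" for j
    have Gm: "G j \<in> sets M" for j unfolding G_def by measurable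
    have Gsum: "(\<Sum>k\<in>I j. X k \<omega> / R k \<omega>) \<ge> c" if "\<omega> \<in> G j" for j \<omega>
    proof -
      let ?N = "R (2^Suc j) \<omega>"
      have w: "\<omega> \<in> space M" and h1: "(\<Sum>k\<in>I j. Y k \<omega>) / 2^j > m/2" and h2: "?N < K * 2^j"
        using that by (auto simp: G_def)
      have Npos: "?N > 0" using Rpos[OF w] .
      have "(\<Sum>k\<in>I j. Y k \<omega> / ?N) \<le> (\<Sum>k\<in>I j. X k \<omega> / R k \<omega>)"
      proof (rule sum_mono)
        fix k assume k: "k \<in> I j"
        have a: "Y k \<omega> \<le> X k \<omega>" by (simp add: Y_def)
        have b: "Y k \<omega> \<ge> 0" using X_pos[OF w, of k] by (simp add: Y_def)
        have d: "R k \<omega> \<le> ?N" using k by (intro Rmono[OF w]) (auto simp: I_def)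
        show "Y k \<omega> / ?N \<le> X k \<omega> / R k \<omega>"
          by (rule frac_le) (use a b d Rpos[OF w, of k] in auto)
      qed
      moreover have "(\<Sum>k\<in>I j. Y k \<omega> / ?N) = (\<Sum>k\<in>I j. Y k \<omega>) / ?N"
        by (simp add: sum_divide_distrib)
      moreover have "(\<Sum>k\<in>I j. Y k \<omega>) / ?N \<ge> c"
      proof -
        have A: "(\<Sum>k\<in>I j. Y k \<omega>) > m/2 * 2^j" using h1 by (simp add: field_simps)
        have mp: "m/2 * 2^j > 0" using m_pos by simp
        have "c = (m/2 * 2^j) / (K * 2^j)" by (simp add: c_def field_simps)
        also have "\<dots> \<le> (\<Sum>k\<in>I j. Y k \<omega>) / (K * 2^j)"
          using A Kpos by (intro divide_right_mono) auto
        also have "\<dots> \<le> (\<Sum>k\<in>I j. Y k \<omega>) / ?N"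
          using A h2 Npos mp Kpos by (intro divide_left_mono) auto
        finally show ?thesis .
      qed
      ultimately show ?thesis by linarith
    qed
    have lim: "(\<lambda>j::nat. exp (-2 * 2^j * (m/2)\<^sup>2)) \<longlonglongrightarrow> 0" using m_pos by real_asymp
    obtain J0 where J0: "\<And>j. j \<ge> J0 \<Longrightarrow> exp (-2 * 2^j * (m/2)\<^sup>2) < \<epsilon>/2"
      using order_tendstoD(2)[OF lim, of "\<epsilon>/2"] epos unfolding eventually_sequentially by auto
    have Gc: "measure M (space M - G j) \<le> \<epsilon>" if jJ: "j \<ge> J0" for j
    proof -
      define B1 where "B1 = {\<omega>\<in>space M. (\<Sum>k\<in>I j. Y k \<omega>) / 2^j \<le> m/2}"
      define B2 where "B2 = {\<omega>\<in>space M. R (2^Suc j) \<omega> \<ge> K * 2^j}"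
      have B1m: "B1 \<in> sets M" unfolding B1_def by measurable
      have B2m: "B2 \<in> sets M" unfolding B2_def by measurable
      have "space M - G j \<subseteq> B1 \<union> B2" unfolding G_def B1_def B2_def by auto
      then have "measure M (space M - G j) \<le> measure M (B1 \<union> B2)"
        using B1m B2m by (intro finite_measure_mono) auto
      also have "\<dots> \<le> measure M B1 + measure M B2"
        using B1m B2m by (intro measure_subadditive) (auto simp: emeasure_eq_measure)
      finally have 1: "measure M (space M - G j) \<le> measure M B1 + measure M B2" .
      have 2: "measure M B1 \<le> \<epsilon>/2" using hoeff[of j] J0[OF jJ] unfolding B1_def by linarith
      have "measure M B2 \<le> expectation (R (2^Suc j)) / (K * 2^j)"
        unfolding B2_def
        by (rule integral_Markov_inequality_measure[OF Rint, where A="space M"])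
           (use Kpos in \<open>auto intro!: AE_I2 less_imp_le Rpos\<close>)
      also have "\<dots> = (l0 + 2^Suc j * \<mu>L) / (K * 2^j)" by (simp add: Rexp)
      also have "\<dots> \<le> ((l0 + 2 * \<mu>L) * 2^j) / (K * 2^j)"
      proof (rule divide_right_mono)
        have "l0 \<le> l0 * 2^j" using l0_pos by simp
        then show "l0 + 2^Suc j * \<mu>L \<le> (l0 + 2 * \<mu>L) * 2^j" by (simp add: algebra_simps)
        show "0 \<le> K * 2^j" using Kpos by simp
      qed
      also have "\<dots> = (l0 + 2 * \<mu>L) / K" by simp
      also have "\<dots> = \<epsilon>/2"
      proof -
        have P: "l0 + 2 * \<mu>L > 0" using l0_pos \<mu>L_nn by simp
        show ?thesis unfolding K_def using P epos by (simp add: field_simps)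
      qed
      finally have 3: "measure M B2 \<le> \<epsilon>/2" .
      show ?thesis using 1 2 3 by linarith
    qed
    define F where "F J = {\<omega>\<in>space M. \<forall>j\<ge>J. \<omega> \<notin> G j}" for J
    have Feq: "F J = space M - (\<Union>j\<in>{J..}. G j)" for J unfolding F_def by auto
    have Fm: "F J \<in> sets M" for J unfolding Feq using Gm by auto
    have FJ: "measure M (F J) \<le> \<epsilon>" for J
    proof -
      have "F J \<subseteq> space M - G (max J J0)" unfolding F_def by auto
      then have "measure M (F J) \<le> measure M (space M - G (max J J0))"
        using Gm by (intro finite_measure_mono) auto
      also have "\<dots> \<le> \<epsilon>" by (rule Gc) simp
      finally show ?thesis .
    qed
    have incF: "incseq F" unfolding incseq_def F_def by auto
    have sub: "space M - D \<subseteq> (\<Union>J. F J)"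
    proof
      fix \<omega> assume w: "\<omega> \<in> space M - D"
      show "\<omega> \<in> (\<Union>J. F J)"
      proof (rule ccontr)
        assume "\<omega> \<notin> (\<Union>J. F J)"
        then have inf: "\<forall>J. \<exists>j\<ge>J. \<omega> \<in> G j" using w unfolding F_def by auto
        have "\<exists>n. S n \<omega> \<ge> real p * c" for p :: nat
        proof (induction p)
          case 0 show ?case by (rule exI[of _ 0]) (simp add: S_def)
        next
          case (Suc p)
          then obtain n where n: "S n \<omega> \<ge> real p * c" by blast
          obtain j where j: "j \<ge> n" "\<omega> \<in> G j" using inf by blast
          have nj: "n \<le> 2^j" using j(1) less_exp[of j] by linarith
          have "S n \<omega> + (\<Sum>k\<in>I j. X k \<omega> / R k \<omega>) \<le> S (2^Suc j) \<omega>"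
          proof -
            have disj: "{..<n} \<inter> I j = {}"
            proof (rule ccontr)
              assume "{..<n} \<inter> I j \<noteq> {}"
              then obtain x where "x < n" "2^j \<le> x" unfolding I_def by auto
              then show False using nj by linarith
            qed
            have "S n \<omega> + (\<Sum>k\<in>I j. X k \<omega> / R k \<omega>) = (\<Sum>k\<in>{..<n} \<union> I j. X k \<omega> / R k \<omega>)"
              unfolding S_def by (rule sum.union_disjoint[symmetric]) (simp_all add: disj I_def[symmetric], simp add: I_def)
            also have "\<dots> \<le> S (2^Suc j) \<omega>" unfolding S_def
            proof (rule sum_mono2)
              show "{..<n} \<union> I j \<subseteq> {..<2 ^ Suc j}" using nj by (auto simp: I_def)
              show "0 \<le> X b \<omega> / R b \<omega>" if "b \<in> {..<2 ^ Suc j} - ({..<n} \<union> I j)" for b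
                using w X_pos[of \<omega> b] Rpos[of \<omega> b] by simp
            qed simp
            finally show ?thesis .
          qed
          then show ?case using n Gsum[OF j(2)]
            by (intro exI[of _ "2^Suc j"]) (simp add: algebra_simps)
        qed
        from this[of "nat \<lceil>1/c\<rceil>"] obtain n where n: "S n \<omega> \<ge> real (nat \<lceil>1/c\<rceil>) * c" by blast
        have "real (nat \<lceil>1/c\<rceil>) \<ge> 1/c" by (rule real_nat_ceiling_ge)
        then have "real (nat \<lceil>1/c\<rceil>) * c \<ge> (1/c) * c" using cpos by (intro mult_right_mono) auto
        then have "real (nat \<lceil>1/c\<rceil>) * c \<ge> 1" using cpos by simp
        then have "S n \<omega> \<ge> 1" using n by linarith
        then show False using w unfolding D_def by auto
      qed
    qed
    have "(\<lambda>J. measure M (F J)) \<longlonglongrightarrow> measure M (\<Union>J. F J)"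
      by (rule finite_Lim_measure_incseq) (use Fm incF in auto)
    then have U: "measure M (\<Union>J. F J) \<le> \<epsilon>"
      by (rule LIMSEQ_le_const2) (use FJ in auto)
    have "measure M (space M - D) \<le> measure M (\<Union>J. F J)"
      using sub Fm by (intro finite_measure_mono) auto
    then show ?thesis using U by linarith
  qed
  have zero: "measure M (space M - D) = 0"
  proof (rule ccontr)
    assume "measure M (space M - D) \<noteq> 0"
    then have "measure M (space M - D) > 0" using measure_nonneg[of M "space M - D"] by linarith
    then show False using small[of "measure M (space M - D) / 2"] by linarith
  qed
  have null: "space M - D \<in> null_sets M"
    by (rule null_setsI) (use zero Dm in \<open>auto simp: emeasure_eq_measure\<close>)
  show ?thesis
  proof (rule AE_I'[OF null], safe)
    fix \<omega> assume w: "\<omega> \<in> space M" and nex: "\<nexists>i. rope_len l0 L i \<omega> \<le> ant_pos l0 X L i \<omega> + X i \<omega>"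
    show "\<omega> \<in> D \<Longrightarrow> False"
    proof -
      assume "\<omega> \<in> D"
      then obtain n where n: "S n \<omega> \<ge> 1" unfolding D_def by auto
      then obtain i where i: "n = Suc i" by (cases n) (auto simp: S_def)
      have ap: "ant_pos l0 X L i \<omega> = R i \<omega> * S i \<omega>"
        unfolding R_def S_def by (rule ant_pos_eq) (metis R_def Rpos w less_irrefl)
      have Rp: "R i \<omega> > 0" using Rpos[OF w] .
      have "S n \<omega> = S i \<omega> + X i \<omega> / R i \<omega>" by (simp add: i S_def)
      then have "ant_pos l0 X L i \<omega> + X i \<omega> = R i \<omega> * S n \<omega>" using ap Rp by (simp add: field_simps)
      also have "\<dots> \<ge> R i \<omega>" using n Rp by simp
      finally show False using nex unfolding R_def by auto
    qed
  qed
qed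

end
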